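(* Let $M\ge 2$. (i) For every prime $p$ and every $k\ge1$, $\Gamma_1(p^k)$ is a normal subgroup of $\Gamma_1(p)$. (ii) If $m$ and $n$ are positive integers with $m\mid_s n$, then $\Gamma_1(n)$ is a normal subgroup of $\Gamma_1(m)$.
   Context: For a prime power $p^k$ ($k>0$), $\Gamma_1(p^k)=\{g=(g_{ij})\in SL_M(\mathbb{Z}): p^{k-1}\mid g_{ij}\text{ for }i<j,\ p^k\mid (g_{ij}-\delta_{ij})\text{ for } i\ge j\}$. For $n=p_1^{e_1}\cdots p_s^{e_s}$, $\Gamma_1(n)=\bigcap_i\Gamma_1(p_i^{e_i})$. We write $m\mid_s n$ ("$n$ is a strong multiple of $m$") if $m\mid n$ and every prime dividing $n$ also divides $m$. *)

theory Defs
  imports "Jordan_Normal_Form.Determinant" "HOL-Algebra.Coset" "HOL-Computational_Algebra.Primes"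
begin

definition SL :: "nat \<Rightarrow> int mat set" where
  "SL M = {g \<in> carrier_mat M M. det g = 1}"

definition SL_grp :: "nat \<Rightarrow> int mat monoid" where
  "SL_grp M = \<lparr>carrier = SL M, mult = (*), one = 1\<^sub>m M\<rparr>"

definition Gamma1_pp :: "nat \<Rightarrow> nat \<Rightarrow> nat \<Rightarrow> int mat set" where
  "Gamma1_pp M p k = {g \<in> SL M.
      (\<forall>i j. i < j \<and> j < M \<longrightarrow> int p ^ (k - 1) dvd g $$ (i, j)) \<and>
      (\<forall>i j. j \<le> i \<and> i < M \<longrightarrow> int p ^ k dvd (g $$ (i, j) - (if i = j then 1 else 0)))}"

definition Gamma1 :: "nat \<Rightarrow> nat \<Rightarrow> int mat set" where
  "Gamma1 M n = SL M \<inter> (\<Inter>p \<in> prime_factors n. Gamma1_pp M p (multiplicity p n))"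

definition strong_dvd :: "nat \<Rightarrow> nat \<Rightarrow> bool" where
  "strong_dvd m n \<longleftrightarrow> m dvd n \<and> (\<forall>p. prime p \<longrightarrow> p dvd n \<longrightarrow> p dvd m)"

end

theory Submission
  imports Defs
begin

lemma SL_grp_simps[simp]: "carrier (SL_grp M) = SL M" "\<one>\<^bsub>SL_grp M\<^esub> = 1\<^sub>m M"
  by (auto simp: SL_grp_def)
lemma SL_grp_mult: "x \<otimes>\<^bsub>SL_grp M\<^esub> y = x * y"
  by (auto simp: SL_grp_def)

lemma SL_group: "group (SL_grp M)"
proof (rule groupI)
  fix x y assume "x \<in> carrier (SL_grp M)" "y \<in> carrier (SL_grp M)"
  then show "x \<otimes>\<^bsub>SL_grp M\<^esub> y \<in> carrier (SL_grp M)"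
    by (auto simp: SL_def det_mult SL_grp_mult)
next
  show "\<one>\<^bsub>SL_grp M\<^esub> \<in> carrier (SL_grp M)" by (auto simp: SL_def)
next
  fix x y z assume "x \<in> carrier (SL_grp M)" "y \<in> carrier (SL_grp M)" "z \<in> carrier (SL_grp M)"
  then show "x \<otimes>\<^bsub>SL_grp M\<^esub> y \<otimes>\<^bsub>SL_grp M\<^esub> z = x \<otimes>\<^bsub>SL_grp M\<^esub> (y \<otimes>\<^bsub>SL_grp M\<^esub> z)"
    by (auto simp: SL_def assoc_mult_mat SL_grp_mult)
next
  fix x assume "x \<in> carrier (SL_grp M)"
  then show "\<one>\<^bsub>SL_grp M\<^esub> \<otimes>\<^bsub>SL_grp M\<^esub> x = x"
    by (auto simp: SL_def SL_grp_mult)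
next
  fix x assume "x \<in> carrier (SL_grp M)"
  then have x: "x \<in> carrier_mat M M" "det x = 1" by (auto simp: SL_def)
  have a: "adj_mat x \<in> carrier_mat M M" "adj_mat x * x = 1\<^sub>m M" using adj_mat[OF x(1)] x(2) by auto
  have "det (adj_mat x * x) = 1" using a by simp
  then have "det (adj_mat x) = 1" using det_mult[OF a(1) x(1)] x(2) by simp
  then show "\<exists>y\<in>carrier (SL_grp M). y \<otimes>\<^bsub>SL_grp M\<^esub> x = \<one>\<^bsub>SL_grp M\<^esub>"
    using a by (auto simp: SL_def SL_grp_mult)
qed

interpretation G: group "SL_grp M" by (rule SL_group)

lemma SL_closed[simp]:
  "x \<in> SL M \<Longrightarrow> x [^]\<^bsub>SL_grp M\<^esub> (n::nat) \<in> SL M"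
  "x \<in> SL M \<Longrightarrow> inv\<^bsub>SL_grp M\<^esub> x \<in> SL M"
  "x \<in> SL M \<Longrightarrow> y \<in> SL M \<Longrightarrow> x * y \<in> SL M"
  using G.nat_pow_closed[of x M n] G.inv_closed[of x M] G.m_closed[of x M y]
  by (auto simp: SL_grp_mult)

definition congm :: "nat \<Rightarrow> int \<Rightarrow> int mat \<Rightarrow> int mat \<Rightarrow> bool" where
  "congm M q A B \<longleftrightarrow> (\<forall>i<M. \<forall>j<M. q dvd A $$ (i,j) - B $$ (i,j))"

lemma entry_mult:
  assumes "A \<in> carrier_mat M M" "B \<in> carrier_mat M M" "i < M" "j < M"
  shows "(A * B) $$ (i,j) = (\<Sum>l\<in>{0..<M}. A $$ (i,l) * B $$ (l,j))"
  using assms by (simp add: scalar_prod_def)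

lemma congm_refl: "congm M q A A" by (simp add: congm_def)
lemma congm_sym: "congm M q A B \<Longrightarrow> congm M q B A"
  unfolding congm_def by (metis dvd_diff_commute)

lemma congm_mult:
  assumes "A \<in> carrier_mat M M" "B \<in> carrier_mat M M" "C \<in> carrier_mat M M" "D \<in> carrier_mat M M"
    "congm M q A B" "congm M q C D"
  shows "congm M q (A * C) (B * D)"
  unfolding congm_def
proof (intro allI impI)
  fix i j assume ij: "i < M" "j < M"
  have "(A * C) $$ (i,j) - (B * D) $$ (i,j) = (\<Sum>l\<in>{0..<M}. A $$ (i,l) * C $$ (l,j) - B $$ (i,l) * D $$ (l,j))"
    using entry_mult[OF assms(1,3) ij] entry_mult[OF assms(2,4) ij] by (simp add: sum_subtractf)
  also have "q dvd \<dots>"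
  proof (rule dvd_sum)
    fix l assume "l \<in> {0..<M}"
    then have l: "l < M" by simp
    have "A $$ (i,l) * C $$ (l,j) - B $$ (i,l) * D $$ (l,j)
      = A $$ (i,l) * (C $$ (l,j) - D $$ (l,j)) + (A $$ (i,l) - B $$ (i,l)) * D $$ (l,j)"
      by (simp add: algebra_simps)
    moreover have "q dvd C $$ (l,j) - D $$ (l,j)" "q dvd A $$ (i,l) - B $$ (i,l)"
      using assms(5,6) ij l by (auto simp: congm_def)
    ultimately show "q dvd A $$ (i,l) * C $$ (l,j) - B $$ (i,l) * D $$ (l,j)" by simp
  qed
  finally show "q dvd (A * C) $$ (i,j) - (B * D) $$ (i,j)" .
qed

lemma inv_cong_pow:
  assumes x: "x \<in> SL M" and q: "q > 0"
  shows "\<exists>r. congm M q (inv\<^bsub>SL_grp M\<^esub> x) (x [^]\<^bsub>SL_grp M\<^esub> (r::nat))"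
proof -
  let ?G = "SL_grp M"
  define F where "F (t::nat) = (\<lambda>(i,j). if i < M \<and> j < M then (x [^]\<^bsub>?G\<^esub> (t::nat)) $$ (i,j) mod q else 0)" for t
  let ?S = "{f. \<forall>z. (z \<in> {0..<M}\<times>{0..<M} \<longrightarrow> f z \<in> {0..<q}) \<and> (z \<notin> {0..<M}\<times>{0..<M} \<longrightarrow> f z = 0)}"
  have "finite ?S" by (rule finite_set_of_finite_funs) auto
  moreover have "range F \<subseteq> ?S" using q by (auto simp: F_def)
  ultimately have "finite (range F)" by (rule finite_subset[rotated])
  then have "\<not> inj F" using finite_imageD infinite_UNIV_nat by blast
  then obtain a b where ab: "a \<noteq> b" "F a = F b" unfolding inj_def by blast
  have cgen: "congm M q (x [^]\<^bsub>?G\<^esub> a') (x [^]\<^bsub>?G\<^esub> b')" if "F a' = F b'" for a' b'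
    unfolding congm_def
  proof (intro allI impI)
    fix i j assume "i < M" "j < M"
    then have "F a' (i,j) = F b' (i,j)" using that by simp
    with \<open>i<M\<close> \<open>j<M\<close> show "q dvd (x [^]\<^bsub>?G\<^esub> a') $$ (i,j) - (x [^]\<^bsub>?G\<^esub> b') $$ (i,j)"
      by (simp add: F_def mod_eq_dvd_iff)
  qed
  obtain a b :: nat where ab: "a < b" "congm M q (x [^]\<^bsub>?G\<^esub> a) (x [^]\<^bsub>?G\<^esub> b)"
  proof (cases "a < b")
    case True then show ?thesis using that[OF True cgen[OF ab(2)]] by blast
  next
    case False then have "b < a" using ab(1) by simp
    then show ?thesis using that[OF _ cgen[OF ab(2)[symmetric]]] by blast
  qed
  have xc: "x \<in> carrier ?G" using x by simp
  define y where "y = inv\<^bsub>?G\<^esub> (x [^]\<^bsub>?G\<^esub> Suc a)"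
  have yc: "y \<in> carrier ?G" unfolding y_def by (intro G.inv_closed G.nat_pow_closed xc)
  have e1: "y \<otimes>\<^bsub>?G\<^esub> (x [^]\<^bsub>?G\<^esub> a) = inv\<^bsub>?G\<^esub> x"
    using xc by (simp add: y_def G.inv_mult_group G.m_assoc del: SL_grp_simps)
  have zc: "x [^]\<^bsub>?G\<^esub> Suc a \<in> carrier ?G" "x [^]\<^bsub>?G\<^esub> (b - Suc a) \<in> carrier ?G"
    using xc by (auto intro: G.nat_pow_closed simp del: SL_grp_simps)
  have "x [^]\<^bsub>?G\<^esub> b = x [^]\<^bsub>?G\<^esub> Suc a \<otimes>\<^bsub>?G\<^esub> x [^]\<^bsub>?G\<^esub> (b - Suc a)"
    using ab(1) xc G.nat_pow_mult[OF xc, of "Suc a" "b - Suc a"] by (simp del: SL_grp_simps G.nat_pow_Suc)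
  then have e2: "y \<otimes>\<^bsub>?G\<^esub> (x [^]\<^bsub>?G\<^esub> b) = x [^]\<^bsub>?G\<^esub> (b - Suc a)"
    using zc yc unfolding y_def
    by (simp only: G.m_assoc[symmetric] G.l_inv G.l_one)
  have cm: "\<And>z. z \<in> carrier ?G \<Longrightarrow> z \<in> carrier_mat M M" by (simp add: SL_def)
  have "congm M q (y * (x [^]\<^bsub>?G\<^esub> a)) (y * (x [^]\<^bsub>?G\<^esub> b))"
    by (rule congm_mult[OF cm cm cm cm congm_refl ab(2)]) (use yc xc in auto)
  then show ?thesis using e1 e2 by (auto simp: SL_grp_mult)
qed

lemma subgroup_crit:
  assumes sub: "K \<subseteq> SL M" and one: "1\<^sub>m M \<in> K" and mult: "\<And>x y. x \<in> K \<Longrightarrow> y \<in> K \<Longrightarrow> x * y \<in> K"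
    and q: "q > 0" and cg: "\<And>x y. x \<in> K \<Longrightarrow> y \<in> SL M \<Longrightarrow> congm M q x y \<Longrightarrow> y \<in> K"
  shows "subgroup K (SL_grp M)"
proof (rule G.subgroupI)
  show "K \<subseteq> carrier (SL_grp M)" using sub by simp
  show "K \<noteq> {}" using one by auto
  show "a \<otimes>\<^bsub>SL_grp M\<^esub> b \<in> K" if "a \<in> K" "b \<in> K" for a b
    using mult[OF that] by (simp add: SL_grp_mult)
  fix x assume x: "x \<in> K"
  then have xs: "x \<in> SL M" using sub by auto
  obtain r where r: "congm M q (inv\<^bsub>SL_grp M\<^esub> x) (x [^]\<^bsub>SL_grp M\<^esub> (r::nat))"
    using inv_cong_pow[OF xs q] by blast
  have "x [^]\<^bsub>SL_grp M\<^esub> (n::nat) \<in> K" for n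
  proof (induction n)
    case 0 then show ?case using one by simp
  next
    case (Suc n) then show ?case using mult[OF Suc x] by (simp add: SL_grp_mult)
  qed
  then show "inv\<^bsub>SL_grp M\<^esub> x \<in> K"
    using cg[OF _ _ congm_sym[OF r]] xs by auto
qed

definition Rk :: "nat \<Rightarrow> nat \<Rightarrow> nat \<Rightarrow> int mat \<Rightarrow> bool" where
  "Rk M p k A \<longleftrightarrow> (\<forall>i<M. \<forall>j<M. (i < j \<longrightarrow> int p ^ (k - 1) dvd A $$ (i,j)) \<and> (j \<le> i \<longrightarrow> int p ^ k dvd A $$ (i,j)))"

definition Lam :: "nat \<Rightarrow> nat \<Rightarrow> int mat \<Rightarrow> bool" where
  "Lam M p B \<longleftrightarrow> (\<forall>i<M. \<forall>j<M. j < i \<longrightarrow> int p dvd B $$ (i,j))"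

lemma Rk_mult_left:
  assumes A: "A \<in> carrier_mat M M" and B: "B \<in> carrier_mat M M" and k: "k \<ge> 1"
    and L: "Lam M p B" and R: "Rk M p k A"
  shows "Rk M p k (B * A)"
  unfolding Rk_def
proof (intro allI impI conjI)
  have pk: "int p ^ k = int p * int p ^ (k - 1)" using k by (cases k) auto
  fix i j assume ij: "i < M" "j < M"
  {
    assume "i < j"
    show "int p ^ (k - 1) dvd (B * A) $$ (i,j)"
      unfolding entry_mult[OF B A ij]
    proof (rule dvd_sum)
      fix l assume "l \<in> {0..<M}"
      then have l: "l < M" by simp
      have "int p ^ (k - 1) dvd A $$ (l, j)"
      proof (cases "l < j")
        case True then show ?thesis using R l ij by (auto simp: Rk_def)
      next
        case False
        then have "int p ^ k dvd A $$ (l, j)" using R l ij by (auto simp: Rk_def)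
        moreover have "int p ^ (k - 1) dvd int p ^ k" using pk by simp
        ultimately show ?thesis by (rule dvd_trans[rotated])
      qed
      then show "int p ^ (k - 1) dvd B $$ (i, l) * A $$ (l, j)" by simp
    qed
  }
  {
    assume "j \<le> i"
    show "int p ^ k dvd (B * A) $$ (i,j)"
      unfolding entry_mult[OF B A ij]
    proof (rule dvd_sum)
      fix l assume "l \<in> {0..<M}"
      then have l: "l < M" by simp
      show "int p ^ k dvd B $$ (i, l) * A $$ (l, j)"
      proof (cases "l < j")
        case True
        then have "int p ^ (k - 1) dvd A $$ (l, j)" "int p dvd B $$ (i, l)"
          using R L l ij \<open>j \<le> i\<close> by (auto simp: Rk_def Lam_def)
        then have "int p ^ (k - 1) * int p dvd A $$ (l, j) * B $$ (i, l)" by (rule mult_dvd_mono)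
        then show ?thesis using pk by (simp add: mult.commute)
      next
        case False
        then have "int p ^ k dvd A $$ (l, j)" using R l ij by (auto simp: Rk_def)
        then show ?thesis by simp
      qed
    qed
  }
qed

lemma Rk_mult_right:
  assumes A: "A \<in> carrier_mat M M" and B: "B \<in> carrier_mat M M" and k: "k \<ge> 1"
    and L: "Lam M p B" and R: "Rk M p k A"
  shows "Rk M p k (A * B)"
  unfolding Rk_def
proof (intro allI impI conjI)
  have pk: "int p ^ k = int p ^ (k - 1) * int p" using k by (cases k) (auto simp: mult.commute)
  fix i j assume ij: "i < M" "j < M"
  {
    assume "i < j"
    show "int p ^ (k - 1) dvd (A * B) $$ (i,j)"
      unfolding entry_mult[OF A B ij]
    proof (rule dvd_sum)
      fix l assume "l \<in> {0..<M}"
      then have l: "l < M" by simp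
      have "int p ^ (k - 1) dvd A $$ (i, l)"
      proof (cases "i < l")
        case True then show ?thesis using R l ij by (auto simp: Rk_def)
      next
        case False
        then have "int p ^ k dvd A $$ (i, l)" using R l ij by (auto simp: Rk_def)
        moreover have "int p ^ (k - 1) dvd int p ^ k" using pk by simp
        ultimately show ?thesis by (rule dvd_trans[rotated])
      qed
      then show "int p ^ (k - 1) dvd A $$ (i, l) * B $$ (l, j)" by simp
    qed
  }
  {
    assume "j \<le> i"
    show "int p ^ k dvd (A * B) $$ (i,j)"
      unfolding entry_mult[OF A B ij]
    proof (rule dvd_sum)
      fix l assume "l \<in> {0..<M}"
      then have l: "l < M" by simp
      show "int p ^ k dvd A $$ (i, l) * B $$ (l, j)"
      proof (cases "i < l")
        case True
        then have "int p ^ (k - 1) dvd A $$ (i, l)" "int p dvd B $$ (l, j)"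
          using R L l ij \<open>j \<le> i\<close> by (auto simp: Rk_def Lam_def)
        then have "int p ^ (k - 1) * int p dvd A $$ (i, l) * B $$ (l, j)" by (rule mult_dvd_mono)
        then show ?thesis using pk by simp
      next
        case False
        then have "int p ^ k dvd A $$ (i, l)" using R l ij by (auto simp: Rk_def)
        then show ?thesis by simp
      qed
    qed
  }
qed

lemma Rk_add:
  assumes "A \<in> carrier_mat M M" "B \<in> carrier_mat M M" "Rk M p k A" "Rk M p k B"
  shows "Rk M p k (A + B)"
  using assms by (auto simp: Rk_def)

lemma Rk_Lam:
  assumes "k \<ge> 1" "Rk M p k A" shows "Lam M p A"
  unfolding Lam_def
proof (intro allI impI)
  fix i j assume "i < M" "j < M" "j < i"
  then have "int p ^ k dvd A $$ (i,j)" using assms by (auto simp: Rk_def)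
  moreover have "int p dvd int p ^ k" using assms(1) by (simp add: dvd_power)
  ultimately show "int p dvd A $$ (i,j)" by (rule dvd_trans[rotated])
qed

lemma entry_minus_one:
  assumes "g \<in> carrier_mat M M" "i < M" "j < M"
  shows "(g - 1\<^sub>m M) $$ (i,j) = g $$ (i,j) - (if i = j then 1 else 0)"
  using assms by simp

lemma Gamma1_pp_iff:
  "g \<in> Gamma1_pp M p k \<longleftrightarrow> g \<in> SL M \<and> Rk M p k (g - 1\<^sub>m M)"
proof -
  have "Rk M p k (g - 1\<^sub>m M) \<longleftrightarrow> (\<forall>i j. i < j \<and> j < M \<longrightarrow> int p ^ (k - 1) dvd g $$ (i, j)) \<and>
      (\<forall>i j. j \<le> i \<and> i < M \<longrightarrow> int p ^ k dvd (g $$ (i, j) - (if i = j then 1 else 0)))"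
    if "g \<in> carrier_mat M M"
    unfolding Rk_def
  proof (intro iffI conjI allI impI)
    fix i j
    assume H: "\<forall>i<M. \<forall>j<M. (i < j \<longrightarrow> int p ^ (k - 1) dvd (g - 1\<^sub>m M) $$ (i, j)) \<and>
              (j \<le> i \<longrightarrow> int p ^ k dvd (g - 1\<^sub>m M) $$ (i, j))"
    {
      assume a: "i < j \<and> j < M"
      then have "int p ^ (k - 1) dvd (g - 1\<^sub>m M) $$ (i, j)" using H by auto
      then show "int p ^ (k - 1) dvd g $$ (i, j)" using a entry_minus_one[OF that, of i j] by simp
    }
    {
      assume a: "j \<le> i \<and> i < M"
      then have "int p ^ k dvd (g - 1\<^sub>m M) $$ (i, j)" using H by auto
      then show "int p ^ k dvd (g $$ (i, j) - (if i = j then 1 else 0))" using a entry_minus_one[OF that, of i j] by simp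
    }
  next
    fix i j
    assume H: "(\<forall>i j. i < j \<and> j < M \<longrightarrow> int p ^ (k - 1) dvd g $$ (i, j)) \<and>
      (\<forall>i j. j \<le> i \<and> i < M \<longrightarrow> int p ^ k dvd (g $$ (i, j) - (if i = j then 1 else 0)))"
      and ij: "i < M" "j < M"
    {
      assume a: "i < j"
      then show "int p ^ (k - 1) dvd (g - 1\<^sub>m M) $$ (i, j)" using H ij entry_minus_one[OF that ij] by simp
    }
    {
      assume a: "j \<le> i"
      then show "int p ^ k dvd (g - 1\<^sub>m M) $$ (i, j)" using H ij entry_minus_one[OF that ij] by simp
    }
  qed
  note X = this
  show ?thesis
  proof (cases "g \<in> carrier_mat M M")
    case True
    have "g \<in> Gamma1_pp M p k \<longleftrightarrow> g \<in> SL M \<and> ((\<forall>i j. i < j \<and> j < M \<longrightarrow> int p ^ (k - 1) dvd g $$ (i, j)) \<and>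
      (\<forall>i j. j \<le> i \<and> i < M \<longrightarrow> int p ^ k dvd (g $$ (i, j) - (if i = j then 1 else 0))))"
      unfolding Gamma1_pp_def by (rule mem_Collect_eq)
    then show ?thesis using X[OF True] by simp
  next
    case False then show ?thesis unfolding Gamma1_pp_def SL_def by simp
  qed
qed

lemma Lam_K1: "g \<in> Gamma1_pp M p 1 \<Longrightarrow> Lam M p g"
  unfolding Lam_def
proof (intro allI impI)
  fix i j assume g: "g \<in> Gamma1_pp M p 1" and ij: "i < M" "j < M" "j < i"
  then have "\<forall>i j. j \<le> i \<and> i < M \<longrightarrow> int p ^ 1 dvd (g $$ (i, j) - (if i = j then 1 else 0))"
    unfolding Gamma1_pp_def mem_Collect_eq by metis
  then have "int p ^ 1 dvd g $$ (i, j) - (if i = j then 1 else 0)" using ij by (meson less_imp_le)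
  then show "int p dvd g $$ (i,j)" using ij by simp
qed

lemma plus_one_eq: "(g::int mat) \<in> carrier_mat M M \<Longrightarrow> (g - 1\<^sub>m M) + 1\<^sub>m M = g"
  by (rule eq_matI) auto
lemma minus_one_eq: "(Y::int mat) \<in> carrier_mat M M \<Longrightarrow> (Y + 1\<^sub>m M) - 1\<^sub>m M = Y"
  by (rule eq_matI) auto

lemma prod_ident:
  assumes A: "(A::int mat) \<in> carrier_mat M M" and B: "B \<in> carrier_mat M M"
  shows "(A + 1\<^sub>m M) * (B + 1\<^sub>m M) = (A * B + A + B) + 1\<^sub>m M"
proof -
  have "(A + 1\<^sub>m M) * (B + 1\<^sub>m M) = A * (B + 1\<^sub>m M) + 1\<^sub>m M * (B + 1\<^sub>m M)"
    using A B by (intro add_mult_distrib_mat) auto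
  also have "A * (B + 1\<^sub>m M) = A * B + A * 1\<^sub>m M"
    using A B by (intro mult_add_distrib_mat) auto
  finally show ?thesis using A B by (auto simp: assoc_add_mat)
qed

lemma conj_ident:
  assumes x: "(x::int mat) \<in> carrier_mat M M" and A: "A \<in> carrier_mat M M" and x': "x' \<in> carrier_mat M M"
    and xx: "x * x' = 1\<^sub>m M"
  shows "x * (A + 1\<^sub>m M) * x' = x * A * x' + 1\<^sub>m M"
proof -
  have "x * (A + 1\<^sub>m M) = x * A + x * 1\<^sub>m M"
    using x A by (intro mult_add_distrib_mat) auto
  then have "x * (A + 1\<^sub>m M) * x' = (x * A + x) * x'" using x by (simp add: right_mult_one_mat)
  also have "\<dots> = x * A * x' + x * x'"
    using x A x' by (intro add_mult_distrib_mat) auto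
  finally show ?thesis using xx by simp
qed

lemma K_mult:
  assumes k: "k \<ge> 1" and g: "g \<in> Gamma1_pp M p k" and h: "h \<in> Gamma1_pp M p k"
  shows "g * h \<in> Gamma1_pp M p k"
proof -
  have gs: "g \<in> SL M" "Rk M p k (g - 1\<^sub>m M)" and hs: "h \<in> SL M" "Rk M p k (h - 1\<^sub>m M)"
    using g h Gamma1_pp_iff by auto
  have gc: "g \<in> carrier_mat M M" and hc: "h \<in> carrier_mat M M" using gs hs by (auto simp: SL_def)
  define A where "A = g - 1\<^sub>m M"
  define B where "B = h - 1\<^sub>m M"
  have Ac: "A \<in> carrier_mat M M" and Bc: "B \<in> carrier_mat M M" using gc hc by (auto simp: A_def B_def)
  have "g * h = (A * B + A + B) + 1\<^sub>m M"
    using prod_ident[OF Ac Bc] plus_one_eq[OF gc] plus_one_eq[OF hc] by (simp add: A_def B_def)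
  then have e: "g * h - 1\<^sub>m M = A * B + A + B" using minus_one_eq Ac Bc by auto
  have "Rk M p k (A * B)"
    by (rule Rk_mult_right[OF Ac Bc k Rk_Lam[OF k]]) (use gs hs in \<open>auto simp: A_def B_def\<close>)
  then have "Rk M p k (A * B + A + B)"
    using Ac Bc gs hs by (intro Rk_add) (auto simp: A_def B_def)
  then show ?thesis using e gs hs Gamma1_pp_iff by auto
qed

lemma K_conj:
  assumes k: "k \<ge> 1" and x: "x \<in> Gamma1_pp M p 1" and h: "h \<in> Gamma1_pp M p k"
    and x': "x' \<in> Gamma1_pp M p 1" and xx: "x * x' = 1\<^sub>m M"
  shows "x * h * x' \<in> Gamma1_pp M p k"
proof -
  have xs: "x \<in> SL M" and x's: "x' \<in> SL M" and hs: "h \<in> SL M" "Rk M p k (h - 1\<^sub>m M)"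
    using x x' h Gamma1_pp_iff by auto
  have xc: "x \<in> carrier_mat M M" and x'c: "x' \<in> carrier_mat M M" and hc: "h \<in> carrier_mat M M"
    using xs x's hs by (auto simp: SL_def)
  define A where "A = h - 1\<^sub>m M"
  have Ac: "A \<in> carrier_mat M M" using hc by (auto simp: A_def)
  have "x * h * x' = x * A * x' + 1\<^sub>m M"
    using conj_ident[OF xc Ac x'c xx] plus_one_eq[OF hc] by (simp add: A_def)
  then have e: "x * h * x' - 1\<^sub>m M = x * A * x'" using minus_one_eq[of "x * A * x'" M] Ac xc x'c by auto
  have "Rk M p k (x * A)"
    by (rule Rk_mult_left[OF Ac xc k Lam_K1[OF x]]) (use hs in \<open>simp add: A_def\<close>)
  moreover have xAc: "x * A \<in> carrier_mat M M" using xc Ac by auto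
  ultimately have "Rk M p k (x * A * x')"
    using Rk_mult_right[OF xAc x'c k Lam_K1[OF x']] by blast
  moreover have "x * h * x' \<in> SL M" using xs hs x's by simp
  ultimately show ?thesis using e Gamma1_pp_iff by auto
qed

lemma K_one: "1\<^sub>m M \<in> Gamma1_pp M p k"
  unfolding Gamma1_pp_def mem_Collect_eq
proof (intro conjI allI impI)
  show "1\<^sub>m M \<in> SL M" by (simp add: SL_def)
  fix i j
  show "int p ^ (k - 1) dvd 1\<^sub>m M $$ (i, j)" if "i < j \<and> j < M" using that by simp
  show "int p ^ k dvd 1\<^sub>m M $$ (i, j) - (if i = j then 1 else 0)" if "j \<le> i \<and> i < M" using that by simp
qed

lemma K_mono:
  assumes "a \<le> b" shows "Gamma1_pp M p b \<subseteq> Gamma1_pp M p a"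
proof
  fix g assume g: "g \<in> Gamma1_pp M p b"
  have d1: "int p ^ (a - 1) dvd int p ^ (b - 1)" using assms by (intro le_imp_power_dvd) simp
  have d2: "int p ^ a dvd int p ^ b" using assms by (intro le_imp_power_dvd) simp
  show "g \<in> Gamma1_pp M p a"
    unfolding Gamma1_pp_def mem_Collect_eq
  proof (intro conjI allI impI)
    show "g \<in> SL M" using g unfolding Gamma1_pp_def by blast
    fix i j
    show "int p ^ (a - 1) dvd g $$ (i, j)" if "i < j \<and> j < M"
    proof -
      have "int p ^ (b - 1) dvd g $$ (i, j)" using g that unfolding Gamma1_pp_def mem_Collect_eq by blast
      then show ?thesis using d1 by (rule dvd_trans[rotated])
    qed
    show "int p ^ a dvd g $$ (i, j) - (if i = j then 1 else 0)" if "j \<le> i \<and> i < M"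
    proof -
      have "int p ^ b dvd g $$ (i, j) - (if i = j then 1 else 0)" using g that unfolding Gamma1_pp_def mem_Collect_eq by blast
      then show ?thesis using d2 by (rule dvd_trans[rotated])
    qed
  qed
qed

lemma congm_dvd: "d dvd q \<Longrightarrow> congm M q x y \<Longrightarrow> congm M d x y"
  unfolding congm_def using dvd_trans by blast

lemma K_cong:
  assumes x: "x \<in> Gamma1_pp M p k" and y: "y \<in> SL M" and c: "congm M (int p ^ k) x y"
  shows "y \<in> Gamma1_pp M p k"
  unfolding Gamma1_pp_def mem_Collect_eq
proof (intro conjI allI impI)
  show "y \<in> SL M" by fact
  fix i j
  show "int p ^ (k - 1) dvd y $$ (i, j)" if ij: "i < j \<and> j < M"
  proof -
    have "int p ^ (k - 1) dvd x $$ (i, j)" using x ij unfolding Gamma1_pp_def mem_Collect_eq by blast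
    moreover have "int p ^ k dvd x $$ (i, j) - y $$ (i, j)" using c ij unfolding congm_def by auto
    moreover have "int p ^ (k - 1) dvd int p ^ k" by (intro le_imp_power_dvd) simp
    ultimately have "int p ^ (k - 1) dvd x $$ (i, j) - (x $$ (i, j) - y $$ (i, j))"
      using dvd_trans dvd_diff by blast
    then show ?thesis by simp
  qed
  show "int p ^ k dvd y $$ (i, j) - (if i = j then 1 else 0)" if ij: "j \<le> i \<and> i < M"
  proof -
    have "int p ^ k dvd x $$ (i, j) - (if i = j then 1 else 0)" using x ij unfolding Gamma1_pp_def mem_Collect_eq by blast
    moreover have "int p ^ k dvd x $$ (i, j) - y $$ (i, j)" using c ij unfolding congm_def by auto
    ultimately have "int p ^ k dvd (x $$ (i, j) - (if i = j then 1 else 0)) - (x $$ (i, j) - y $$ (i, j))"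
      by (rule dvd_diff)
    then show ?thesis by simp
  qed
qed

lemma K_subgroup:
  assumes p: "prime p" and k: "k \<ge> 1"
  shows "subgroup (Gamma1_pp M p k) (SL_grp M)"
proof (rule subgroup_crit[where q = "int p ^ k"])
  show "Gamma1_pp M p k \<subseteq> SL M" unfolding Gamma1_pp_def by blast
  show "1\<^sub>m M \<in> Gamma1_pp M p k" by (rule K_one)
  show "x * y \<in> Gamma1_pp M p k" if "x \<in> Gamma1_pp M p k" "y \<in> Gamma1_pp M p k" for x y
    using K_mult[OF k that] .
  show "0 < int p ^ k" using p prime_gt_0_nat by simp
  show "y \<in> Gamma1_pp M p k" if "x \<in> Gamma1_pp M p k" "y \<in> SL M" "congm M (int p ^ k) x y" for x y
    using K_cong[OF that] .
qed

lemma mult_PF: "p \<in> prime_factors n \<Longrightarrow> multiplicity p n \<ge> 1"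
proof -
  assume "p \<in> prime_factors n"
  then have "multiplicity p n > 0" unfolding prime_factors_multiplicity by simp
  then show ?thesis by simp
qed

lemma Gamma1_subgroup:
  assumes n: "n > 0"
  shows "subgroup (Gamma1 M n) (SL_grp M)"
proof (rule subgroup_crit[where q = "int n"])
  show "Gamma1 M n \<subseteq> SL M" unfolding Gamma1_def by blast
  have "1\<^sub>m M \<in> SL M" by (simp add: SL_def)
  then show "1\<^sub>m M \<in> Gamma1 M n" unfolding Gamma1_def by (simp add: K_one)
  show "x * y \<in> Gamma1 M n" if xy: "x \<in> Gamma1 M n" "y \<in> Gamma1 M n" for x y
  proof -
    have "x * y \<in> Gamma1_pp M p (multiplicity p n)" if pn: "p \<in> prime_factors n" for p
    proof -
      have "x \<in> Gamma1_pp M p (multiplicity p n)" "y \<in> Gamma1_pp M p (multiplicity p n)"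
        using xy pn unfolding Gamma1_def by auto
      then show ?thesis by (rule K_mult[OF mult_PF[OF pn]])
    qed
    moreover have "x * y \<in> SL M" using xy unfolding Gamma1_def by simp
    ultimately show ?thesis unfolding Gamma1_def by blast
  qed
  show "0 < int n" using n by simp
  show "y \<in> Gamma1 M n" if xy: "x \<in> Gamma1 M n" "y \<in> SL M" "congm M (int n) x y" for x y
  proof -
    have "y \<in> Gamma1_pp M p (multiplicity p n)" if pn: "p \<in> prime_factors n" for p
    proof -
      have "p ^ multiplicity p n dvd n" by (rule multiplicity_dvd)
      then have "int p ^ multiplicity p n dvd int n" by (metis of_nat_dvd_iff of_nat_power)
      then have "congm M (int p ^ multiplicity p n) x y" using congm_dvd xy(3) by blast
      moreover have "x \<in> Gamma1_pp M p (multiplicity p n)" using xy(1) pn unfolding Gamma1_def by blast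
      ultimately show ?thesis using K_cong xy(2) by blast
    qed
    then show ?thesis using xy(2) unfolding Gamma1_def by blast
  qed
qed

lemma normal_crit:
  assumes HS: "subgroup H (SL_grp M)" and KS: "subgroup K (SL_grp M)" and sub: "H \<subseteq> K"
    and conj: "\<And>x h. x \<in> K \<Longrightarrow> h \<in> H \<Longrightarrow> x * h * inv\<^bsub>SL_grp M\<^esub> x \<in> H"
  shows "normal H ((SL_grp M)\<lparr>carrier := K\<rparr>)"
proof -
  have g1: "group ((SL_grp M)\<lparr>carrier := K\<rparr>)" by (rule subgroup.subgroup_is_group[OF KS SL_group])
  show ?thesis
    unfolding group.normal_inv_iff[OF g1]
  proof (intro conjI ballI)
    show "subgroup H ((SL_grp M)\<lparr>carrier := K\<rparr>)" by (rule G.subgroup_incl[OF HS KS sub])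
    fix x h assume x: "x \<in> carrier ((SL_grp M)\<lparr>carrier := K\<rparr>)" and h: "h \<in> H"
    then have xK: "x \<in> K" by simp
    have "inv\<^bsub>(SL_grp M)\<lparr>carrier := K\<rparr>\<^esub> x = inv\<^bsub>SL_grp M\<^esub> x"
      by (rule G.m_inv_consistent[OF KS xK])
    then show "x \<otimes>\<^bsub>(SL_grp M)\<lparr>carrier := K\<rparr>\<^esub> h \<otimes>\<^bsub>(SL_grp M)\<lparr>carrier := K\<rparr>\<^esub> inv\<^bsub>(SL_grp M)\<lparr>carrier := K\<rparr>\<^esub> x \<in> H"
      using conj[OF xK h] by (simp add: SL_grp_mult)
  qed
qed

lemma inv_props:
  assumes KS: "subgroup K (SL_grp M)" and x: "x \<in> K"
  shows "inv\<^bsub>SL_grp M\<^esub> x \<in> K" "x * inv\<^bsub>SL_grp M\<^esub> x = 1\<^sub>m M"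
proof -
  show "inv\<^bsub>SL_grp M\<^esub> x \<in> K" by (rule subgroup.m_inv_closed[OF KS x])
  have "x \<in> carrier (SL_grp M)" using subgroup.subset[OF KS] x by blast
  then have "x \<otimes>\<^bsub>SL_grp M\<^esub> inv\<^bsub>SL_grp M\<^esub> x = \<one>\<^bsub>SL_grp M\<^esub>" by (rule G.r_inv)
  then show "x * inv\<^bsub>SL_grp M\<^esub> x = 1\<^sub>m M" by (simp add: SL_grp_mult)
qed

theorem mainTheorem4:
  fixes M :: nat
  assumes "M \<ge> 2"
  shows "(\<forall>p k. prime p \<and> k \<ge> 1 \<longrightarrow>
            normal (Gamma1_pp M p k) ((SL_grp M)\<lparr>carrier := Gamma1_pp M p 1\<rparr>)) \<and>
         (\<forall>m n. 0 < m \<and> 0 < n \<and> strong_dvd m n \<longrightarrow>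
            normal (Gamma1 M n) ((SL_grp M)\<lparr>carrier := Gamma1 M m\<rparr>))"
proof (intro conjI allI impI)
  fix p k :: nat assume pk: "prime p \<and> k \<ge> 1"
  have S1: "subgroup (Gamma1_pp M p 1) (SL_grp M)" using K_subgroup pk by blast
  show "normal (Gamma1_pp M p k) ((SL_grp M)\<lparr>carrier := Gamma1_pp M p 1\<rparr>)"
  proof (rule normal_crit[OF K_subgroup S1])
    show "prime p" "k \<ge> 1" using pk by auto
    show "Gamma1_pp M p k \<subseteq> Gamma1_pp M p 1" using pk K_mono by blast
    fix x h assume x: "x \<in> Gamma1_pp M p 1" and h: "h \<in> Gamma1_pp M p k"
    show "x * h * inv\<^bsub>SL_grp M\<^esub> x \<in> Gamma1_pp M p k"
      using K_conj[OF _ x h inv_props[OF S1 x]] pk by blast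
  qed
next
  fix m n :: nat assume mn: "0 < m \<and> 0 < n \<and> strong_dvd m n"
  have Sm: "subgroup (Gamma1 M m) (SL_grp M)" using Gamma1_subgroup mn by blast
  have Sn: "subgroup (Gamma1 M n) (SL_grp M)" using Gamma1_subgroup mn by blast
  have mdn: "m dvd n" and sd: "\<And>p. prime p \<Longrightarrow> p dvd n \<Longrightarrow> p dvd m" using mn unfolding strong_dvd_def by auto
  have PF: "p \<in> prime_factors m \<longleftrightarrow> p \<in> prime_factors n" for p
    using mn mdn sd by (auto simp: in_prime_factors_iff intro: dvd_trans)
  show "normal (Gamma1 M n) ((SL_grp M)\<lparr>carrier := Gamma1 M m\<rparr>)"
  proof (rule normal_crit[OF Sn Sm])
    show "Gamma1 M n \<subseteq> Gamma1 M m"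
    proof
      fix g assume g: "g \<in> Gamma1 M n"
      have "g \<in> Gamma1_pp M p (multiplicity p m)" if "p \<in> prime_factors m" for p
      proof -
        have "multiplicity p m \<le> multiplicity p n" using mdn mn by (intro dvd_imp_multiplicity_le) auto
        moreover have "g \<in> Gamma1_pp M p (multiplicity p n)" using g that PF unfolding Gamma1_def by blast
        ultimately show ?thesis using K_mono by blast
      qed
      then show "g \<in> Gamma1 M m" using g unfolding Gamma1_def by blast
    qed
    fix x h assume x: "x \<in> Gamma1 M m" and h: "h \<in> Gamma1 M n"
    have x': "inv\<^bsub>SL_grp M\<^esub> x \<in> Gamma1 M m" "x * inv\<^bsub>SL_grp M\<^esub> x = 1\<^sub>m M"
      using inv_props[OF Sm x] by auto
    have "x * h * inv\<^bsub>SL_grp M\<^esub> x \<in> Gamma1_pp M p (multiplicity p n)" if pn: "p \<in> prime_factors n" for p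
    proof -
      have pm: "p \<in> prime_factors m" using PF pn by blast
      have sub1: "Gamma1_pp M p (multiplicity p m) \<subseteq> Gamma1_pp M p 1" using K_mono mult_PF[OF pm] by blast
      have "x \<in> Gamma1_pp M p 1" "inv\<^bsub>SL_grp M\<^esub> x \<in> Gamma1_pp M p 1"
        using x x'(1) pm sub1 unfolding Gamma1_def by blast+
      moreover have "h \<in> Gamma1_pp M p (multiplicity p n)" using h pn unfolding Gamma1_def by blast
      ultimately show ?thesis using K_conj[OF mult_PF[OF pn]] x'(2) by blast
    qed
    moreover have "x * h * inv\<^bsub>SL_grp M\<^esub> x \<in> SL M"
      using x h x' unfolding Gamma1_def by simp
    ultimately show "x * h * inv\<^bsub>SL_grp M\<^esub> x \<in> Gamma1 M n" unfolding Gamma1_def by blast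
  qed
qed

end
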